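(* Let $N \ge 1$ and let $\rho_1, \rho_2$ be $N \times N$ density matrices (positive semidefinite complex matrices with unit trace). Then $$1 - G(\rho_1,\rho_2) \le D_{\mathrm{tr}}(\rho_1,\rho_2),$$ where $D_{\mathrm{tr}}(\rho_1,\rho_2) = \frac{1}{2}\mathrm{tr}|\rho_1-\rho_2|$ and $G(\rho_1,\rho_2) = \mathrm{tr}\,\rho_1\rho_2 + \sqrt{1-\mathrm{tr}\,\rho_1^2}\,\sqrt{1-\mathrm{tr}\,\rho_2^2}$. Equivalently, $$\frac{1}{2}\mathrm{tr}|\rho_1-\rho_2| + \mathrm{tr}\,\rho_1\rho_2 + \sqrt{1-\mathrm{tr}\,\rho_1^2}\,\sqrt{1-\mathrm{tr}\,\rho_2^2} \ge 1.$$
   Context: For a Hermitian matrix $A$, $|A| = \sqrt{A^2}$, so $\mathrm{tr}|A|$ is the sum of the absolute values of the eigenvalues of $A$. $D_{\mathrm{tr}}$ is called the trace distance and $G$ the superfidelity. *)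

theory Defs
  imports "Jordan_Normal_Form.Schur_Decomposition" "Jordan_Normal_Form.Char_Poly"
    "HOL-Computational_Algebra.Polynomial"
begin

definition mtrace :: "complex mat \<Rightarrow> complex" where
  "mtrace A = (\<Sum>i<dim_row A. A $$ (i, i))"

definition hermitian_mat :: "complex mat \<Rightarrow> bool" where
  "hermitian_mat A \<longleftrightarrow> square_mat A \<and> mat_adjoint A = A"

definition psd_mat :: "complex mat \<Rightarrow> bool" where
  "psd_mat A \<longleftrightarrow> hermitian_mat A \<and>
     (\<forall>v \<in> carrier_vec (dim_row A). 0 \<le> Re ((A *\<^sub>v v) \<bullet>c v))"

definition density_matrix :: "nat \<Rightarrow> complex mat \<Rightarrow> bool" where
  "density_matrix n \<rho> \<longleftrightarrow> \<rho> \<in> carrier_mat n n \<and> psd_mat \<rho> \<and> mtrace \<rho> = 1"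

text \<open>tr|A| for Hermitian A: sum of absolute values of the eigenvalues (with multiplicity),
  i.e. of the roots of the characteristic polynomial.\<close>
definition trace_abs :: "complex mat \<Rightarrow> real" where
  "trace_abs A = sum_mset (image_mset cmod (proots (char_poly A)))"

definition trace_dist :: "complex mat \<Rightarrow> complex mat \<Rightarrow> real" where
  "trace_dist \<rho>1 \<rho>2 = trace_abs (\<rho>1 - \<rho>2) / 2"

definition superfidelity :: "complex mat \<Rightarrow> complex mat \<Rightarrow> real" where
  "superfidelity \<rho>1 \<rho>2 = Re (mtrace (\<rho>1 * \<rho>2))
     + sqrt (1 - Re (mtrace (\<rho>1 * \<rho>1))) * sqrt (1 - Re (mtrace (\<rho>2 * \<rho>2)))"

end

theory Submission
  imports Defs
begin



lemma adj_dim[simp]: "dim_row (mat_adjoint A) = dim_col A" "dim_col (mat_adjoint A) = dim_row A"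
  unfolding mat_adjoint_def by auto

lemma adj_carrier[simp]: "A \<in> carrier_mat n m \<Longrightarrow> mat_adjoint A \<in> carrier_mat m n"
  unfolding carrier_mat_def by auto

lemma adj_index[simp]: "i < dim_col A \<Longrightarrow> j < dim_row A \<Longrightarrow> mat_adjoint (A::complex mat) $$ (i,j) = cnj (A $$ (j,i))"
  unfolding mat_adjoint_def by (simp add: mat_of_rows_index)

lemma adj_adj[simp]: "mat_adjoint (mat_adjoint (A::complex mat)) = A"
  by (rule eq_matI, auto)

lemma adj_one[simp]: "mat_adjoint (1\<^sub>m n :: complex mat) = 1\<^sub>m n"
  by (rule eq_matI, auto)

lemma adj_mult: assumes "(A::complex mat) \<in> carrier_mat n k" "B \<in> carrier_mat k m"
  shows "mat_adjoint (A * B) = mat_adjoint B * mat_adjoint A"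
proof (rule eq_matI)
  fix i j assume "i < dim_row (mat_adjoint B * mat_adjoint A)" "j < dim_col (mat_adjoint B * mat_adjoint A)"
  then show "mat_adjoint (A * B) $$ (i, j) = (mat_adjoint B * mat_adjoint A) $$ (i, j)"
    using assms by (auto simp: scalar_prod_def mult.commute)
qed (use assms in auto)

lemma adj_four_block: assumes "(A::complex mat) \<in> carrier_mat n1 m1" "B \<in> carrier_mat n1 m2"
  "C \<in> carrier_mat n2 m1" "D \<in> carrier_mat n2 m2"
  shows "mat_adjoint (four_block_mat A B C D) = four_block_mat (mat_adjoint A) (mat_adjoint C) (mat_adjoint B) (mat_adjoint D)"
  by (rule eq_matI, use assms in auto)

lemma adj_zero[simp]: "mat_adjoint (0\<^sub>m n m :: complex mat) = 0\<^sub>m m n"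
  by (rule eq_matI, auto)




lemma cscalar_smult: assumes "w \<in> carrier_vec n" "u \<in> carrier_vec n"
  shows "((c::complex) \<cdot>\<^sub>v w) \<bullet>c (d \<cdot>\<^sub>v u) = c * cnj d * (w \<bullet>c u)"
  using assms by (auto simp: scalar_prod_def sum_distrib_left intro!: sum.cong)

lemma cscalar_self: "(w::complex vec) \<bullet>c w = of_real (\<Sum>k<dim_vec w. (cmod (w $ k))^2)"
  by (simp add: scalar_prod_def lessThan_atLeast0 complex_mult_cnj cmod_power2)

definition nrm :: "complex vec \<Rightarrow> complex vec" where
  "nrm w = complex_of_real (1 / sqrt (Re (w \<bullet>c w))) \<cdot>\<^sub>v w"

lemma nrm_unit: assumes "w \<in> carrier_vec n" "w \<bullet>c w \<noteq> 0" shows "nrm w \<bullet>c nrm w = 1"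
proof -
  define s where "s = (\<Sum>k<dim_vec w. (cmod (w $ k))^2)"
  have ww: "w \<bullet>c w = of_real s" unfolding s_def by (rule cscalar_self)
  have "s \<ge> 0" unfolding s_def by (auto intro: sum_nonneg)
  with assms ww have s: "s > 0" by auto
  show ?thesis unfolding nrm_def
    apply (subst cscalar_smult[OF assms(1) assms(1)])
    using s ww by (simp add: field_simps flip: of_real_mult)
qed


lemma adj_mult_self_index: assumes "i < dim_col W" "j < dim_col W"
  shows "(mat_adjoint (W::complex mat) * W) $$ (i,j) = col W j \<bullet>c col W i"
  using assms by (auto simp: scalar_prod_def mult.commute intro!: sum.cong)

lemma nrm_id: "v \<bullet>c v = 1 \<Longrightarrow> nrm v = v"
  unfolding nrm_def by simp

lemma unitary_ext: assumes v: "(v::complex vec) \<in> carrier_vec n" and v1: "v \<bullet>c v = 1" and n: "n > 0"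
  shows "\<exists>W. W \<in> carrier_mat n n \<and> mat_adjoint W * W = 1\<^sub>m n \<and> col W 0 = v"
proof -
  interpret cof_vec_space n "TYPE(complex)" .
  have v0: "v \<noteq> 0\<^sub>v n" using v1 v by auto
  define b where "b = basis_completion v"
  from basis_completion[OF v v0, folded b_def]
  have dist_b: "distinct b" 
    and indep: "\<not> lin_dep (set b)" and b: "set b \<subseteq> carrier_vec n" and hdb: "hd b = v" 
    and len_b: "length b = n" by auto
  from hdb len_b n obtain vs where bv: "b = v # vs" by (cases b, auto)
  define ws where "ws = gram_schmidt n b"
  from gram_schmidt_result[OF b dist_b indep refl, folded ws_def]
  have ws: "set ws \<subseteq> carrier_vec n" "corthogonal ws" "length ws = n" 
    by (auto simp: len_b)
  from gram_schmidt_hd[OF v, of vs, folded bv] have hdws: "hd ws = v" unfolding ws_def .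
  have ws0: "ws ! 0 = v" using hdws ws(3) n by (cases ws, auto)
  define us where "us = map nrm ws"
  define W where "W = mat_of_cols n us"
  have us: "length us = n" "\<And>i. i < n \<Longrightarrow> us ! i = nrm (ws ! i)" unfolding us_def using ws by auto
  have wsc: "\<And>i. i < n \<Longrightarrow> ws ! i \<in> carrier_vec n" using ws by auto
  have usc: "\<And>i. i < n \<Longrightarrow> us ! i \<in> carrier_vec n" using wsc us unfolding nrm_def by auto
  have W: "W \<in> carrier_mat n n" unfolding W_def using us by auto
  have colW: "\<And>i. i < n \<Longrightarrow> col W i = us ! i" unfolding W_def using us usc by auto
  have "mat_adjoint W * W = 1\<^sub>m n"
  proof (rule eq_matI)
    fix i j assume "i < dim_row (1\<^sub>m n :: complex mat)" "j < dim_col (1\<^sub>m n :: complex mat)"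
    hence i: "i < n" and j: "j < n" by auto
    have "(mat_adjoint W * W) $$ (i,j) = us ! j \<bullet>c us ! i"
      using adj_mult_self_index[of i W j] W i j colW by auto
    also have "\<dots> = 1\<^sub>m n $$ (i,j)"
    proof (cases "i = j")
      case True
      have "ws ! i \<bullet>c ws ! i \<noteq> 0" using corthogonalD[OF ws(2), of i i] ws(3) i by auto
      then show ?thesis using True us(2)[OF i] nrm_unit[OF wsc[OF i]] i by auto
    next
      case False
      have "ws ! j \<bullet>c ws ! i = 0" using corthogonalD[OF ws(2), of j i] ws(3) i j False by auto
      moreover have "us ! j \<bullet>c us ! i = complex_of_real (1 / sqrt (Re (ws ! j \<bullet>c ws ! j))) * cnj (complex_of_real (1 / sqrt (Re (ws ! i \<bullet>c ws ! i)))) * (ws ! j \<bullet>c ws ! i)"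
        unfolding us(2)[OF i] us(2)[OF j] nrm_def by (rule cscalar_smult[OF wsc[OF j] wsc[OF i]])
      ultimately show ?thesis using False i j by simp
    qed
    finally show "(mat_adjoint W * W) $$ (i,j) = 1\<^sub>m n $$ (i,j)" .
  qed (use W in auto)
  moreover have "col W 0 = v" using colW[OF n] us(2)[OF n] ws0 nrm_id[OF v1] by simp
  ultimately show ?thesis using W by blast
qed



lemma assoc_test: assumes "(A::complex mat) \<in> carrier_mat n n" "B \<in> carrier_mat n n" "C \<in> carrier_mat n n" "D \<in> carrier_mat n n"
  shows "A * B * C * D = A * (B * (C * D))"
  using assms by (simp add: assoc_mult_mat[of _ n n _ n _ n])

lemma sq_mult: "A \<in> carrier_mat n n \<Longrightarrow> B \<in> carrier_mat n n \<Longrightarrow> A * B \<in> carrier_mat n n" by auto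

lemma schur_unitary:
  fixes A :: "complex mat"
  assumes "A \<in> carrier_mat n n"
  shows "\<exists>U T. U \<in> carrier_mat n n \<and> T \<in> carrier_mat n n \<and> mat_adjoint U * U = 1\<^sub>m n
     \<and> upper_triangular T \<and> A = U * T * mat_adjoint U"
  using assms
proof (induction n arbitrary: A)
  case 0
  then show ?case
    by (intro exI[of _ "1\<^sub>m 0"] exI[of _ A]) (auto simp: upper_triangular_def)
next
  case (Suc n)
  note A = Suc.prems
  obtain as where cp: "char_poly A = (\<Prod>a\<leftarrow>as. [:- a, 1:])" and las: "length as = Suc n"
    using char_poly_factorized[OF A] by blast
  then obtain e as' where as: "as = e # as'" by (cases as) auto
  have "poly (char_poly A) e = 0" unfolding cp as by simp
  hence "eigenvalue A e" using eigenvalue_root_char_poly[OF A] by simp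
  then obtain v0 where ev: "eigenvector A v0 e" unfolding eigenvalue_def by blast
  hence v0: "v0 \<in> carrier_vec (Suc n)" "v0 \<noteq> 0\<^sub>v (Suc n)" "A *\<^sub>v v0 = e \<cdot>\<^sub>v v0"
    unfolding eigenvector_def using A by auto
  have "v0 \<bullet>c v0 \<noteq> 0" using v0 by simp
  define v where "v = nrm v0"
  have v: "v \<in> carrier_vec (Suc n)" unfolding v_def nrm_def using v0 by simp
  have v1: "v \<bullet>c v = 1" unfolding v_def by (rule nrm_unit[OF v0(1)]) fact
  have Av: "A *\<^sub>v v = e \<cdot>\<^sub>v v" unfolding v_def nrm_def
    using v0 A by (simp add: mult_mat_vec smult_smult_assoc mult.commute)
  obtain W where W: "W \<in> carrier_mat (Suc n) (Suc n)" and WW: "mat_adjoint W * W = 1\<^sub>m (Suc n)"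
    and Wc: "col W 0 = v" using unitary_ext[OF v v1] by auto
  have WW': "W * mat_adjoint W = 1\<^sub>m (Suc n)"
    using mat_mult_left_right_inverse[OF adj_carrier[OF W] W WW] .
  define A' where "A' = mat_adjoint W * A * W"
  have A': "A' \<in> carrier_mat (Suc n) (Suc n)" unfolding A'_def using W A by auto
  have colAW: "col (A * W) 0 = e \<cdot>\<^sub>v col W 0"
    using col_mult2[OF A W, of 0] Wc Av by simp
  have A'0: "A' $$ (i, 0) = (if i = 0 then e else 0)" if i: "i < Suc n" for i
  proof -
    have "A' $$ (i, 0) = (mat_adjoint W * (A * W)) $$ (i,0)"
      unfolding A'_def using W A by (simp add: assoc_mult_mat[of _ "Suc n" "Suc n" _ "Suc n" _ "Suc n"])
    also have "\<dots> = row (mat_adjoint W) i \<bullet> col (A * W) 0" using i W A by simp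
    also have "\<dots> = e * (row (mat_adjoint W) i \<bullet> col W 0)" unfolding colAW
      using i W by simp
    also have "row (mat_adjoint W) i \<bullet> col W 0 = (mat_adjoint W * W) $$ (i,0)" using i W by simp
    also have "\<dots> = (if i = 0 then 1 else 0)" unfolding WW using i by simp
    finally show ?thesis by simp
  qed
  define A3 where "A3 = mat n n (\<lambda>(i,j). A' $$ (Suc i, Suc j))"
  define a2 where "a2 = mat 1 n (\<lambda>(i,j). A' $$ (0, Suc j))"
  define a1 where "a1 = mat 1 1 (\<lambda>_. e)"
  have A3: "A3 \<in> carrier_mat n n" and a2: "a2 \<in> carrier_mat 1 n" and a1: "a1 \<in> carrier_mat 1 1"
    unfolding A3_def a2_def a1_def by auto
  have A'blk: "A' = four_block_mat a1 a2 (0\<^sub>m n 1) A3"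
  proof (rule eq_matI)
    fix i j assume "i < dim_row (four_block_mat a1 a2 (0\<^sub>m n 1) A3)" "j < dim_col (four_block_mat a1 a2 (0\<^sub>m n 1) A3)"
    hence i: "i < Suc n" and j: "j < Suc n" using a1 A3 by auto
    show "A' $$ (i, j) = four_block_mat a1 a2 (0\<^sub>m n 1) A3 $$ (i, j)"
      using i j a1 A3 A'0[OF i] unfolding a1_def a2_def A3_def
      by (cases i; cases j; auto)
  qed (use A' a1 A3 in auto)
  obtain U3 T3 where U3: "U3 \<in> carrier_mat n n" and T3: "T3 \<in> carrier_mat n n"
    and UU3: "mat_adjoint U3 * U3 = 1\<^sub>m n" and ut3: "upper_triangular T3"
    and A3eq: "A3 = U3 * T3 * mat_adjoint U3"
    using Suc.IH[OF A3] by blast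
  have UU3': "U3 * mat_adjoint U3 = 1\<^sub>m n"
    using mat_mult_left_right_inverse[OF adj_carrier[OF U3] U3 UU3] .
  define E where "E = four_block_mat (1\<^sub>m 1) (0\<^sub>m 1 n) (0\<^sub>m n 1) U3"
  have E: "E \<in> carrier_mat (Suc n) (Suc n)" unfolding E_def using U3 by auto
  have adjE: "mat_adjoint E = four_block_mat (1\<^sub>m 1) (0\<^sub>m 1 n) (0\<^sub>m n 1) (mat_adjoint U3)"
    unfolding E_def by (subst adj_four_block[OF one_carrier_mat zero_carrier_mat zero_carrier_mat U3], simp)
  have EE: "mat_adjoint E * E = 1\<^sub>m (Suc n)"
    unfolding adjE unfolding E_def
    by (subst mult_four_block_mat[where ?nr1.0=1 and ?n1.0=1 and ?n2.0=n and ?nr2.0=n and ?nc1.0=1 and ?nc2.0=n], use U3 UU3 in auto)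
  define T where "T = four_block_mat a1 (a2 * U3) (0\<^sub>m n 1) T3"
  have T: "T \<in> carrier_mat (Suc n) (Suc n)" unfolding T_def using a1 T3 by auto
  have utT: "upper_triangular T" unfolding T_def
    by (rule upper_triangular_four_block[OF a1 T3 _ ut3], auto simp: a1_def upper_triangular_def)
  have ET: "E * T = four_block_mat a1 (a2 * U3) (0\<^sub>m n 1) (U3 * T3)"
    unfolding E_def T_def
    by (subst mult_four_block_mat[where ?nr1.0=1 and ?n1.0=1 and ?n2.0=n and ?nr2.0=n and ?nc1.0=1 and ?nc2.0=n], use U3 T3 a1 a2 in auto)
  have ETE: "E * T * mat_adjoint E = A'"
    unfolding ET adjE A'blk unfolding E_def
    apply (subst mult_four_block_mat[where ?nr1.0=1 and ?n1.0=1 and ?n2.0=n and ?nr2.0=n and ?nc1.0=1 and ?nc2.0=n])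
    using U3 T3 a1 a2 A3eq UU3' by (auto simp: assoc_mult_mat[of _ 1 n _ n _ n] assoc_mult_mat[of _ n n _ n _ n])
  define U where "U = W * E"
  have U: "U \<in> carrier_mat (Suc n) (Suc n)" unfolding U_def using W E by auto
  have adjU: "mat_adjoint U = mat_adjoint E * mat_adjoint W" unfolding U_def by (rule adj_mult[OF W E])
  have "mat_adjoint U * U = mat_adjoint E * ((mat_adjoint W * W) * E)"
    unfolding adjU unfolding U_def using W E by (simp add: assoc_mult_mat[of _ "Suc n" "Suc n" _ "Suc n" _ "Suc n"])
  hence UU: "mat_adjoint U * U = 1\<^sub>m (Suc n)" using WW EE E by simp
  have ET': "E * T \<in> carrier_mat (Suc n) (Suc n)" using E T by auto
  have aE: "mat_adjoint E \<in> carrier_mat (Suc n) (Suc n)" using E by auto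
  have aW: "mat_adjoint W \<in> carrier_mat (Suc n) (Suc n)" using W by auto
  have "U * T * mat_adjoint U = W * (E * T) * (mat_adjoint E * mat_adjoint W)"
    unfolding adjU unfolding U_def using assoc_mult_mat[OF W E T] by simp
  also have "\<dots> = W * ((E * T) * (mat_adjoint E * mat_adjoint W))"
    using assoc_mult_mat[OF W ET' mult_carrier_mat[OF aE aW]] .
  also have "(E * T) * (mat_adjoint E * mat_adjoint W) = (E * T * mat_adjoint E) * mat_adjoint W"
    using assoc_mult_mat[OF ET' aE aW] by simp
  also have "W * (E * T * mat_adjoint E * mat_adjoint W) = W * (E * T * mat_adjoint E) * mat_adjoint W"
    using assoc_mult_mat[OF W _ aW, of "E * T * mat_adjoint E"] ET' aE by auto
  also have "\<dots> = (W * mat_adjoint W) * A * (W * mat_adjoint W)"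
    unfolding ETE A'_def using W A aW by (simp add: sq_mult assoc_mult_mat[of _ "Suc n" "Suc n" _ "Suc n" _ "Suc n"])
  also have "\<dots> = A" unfolding WW' using A by simp
  finally show ?case using U T UU utT by metis
qed




lemma mtrace_comm: assumes "(A::complex mat) \<in> carrier_mat n m" "B \<in> carrier_mat m n"
  shows "mtrace (A * B) = mtrace (B * A)"
proof -
  have "mtrace (A * B) = (\<Sum>i<n. \<Sum>k<m. A $$ (i,k) * B $$ (k,i))"
    unfolding mtrace_def using assms by (auto simp: scalar_prod_def lessThan_atLeast0 intro!: sum.cong)
  also have "\<dots> = (\<Sum>k<m. \<Sum>i<n. B $$ (k,i) * A $$ (i,k))"
    by (subst sum.swap) (simp add: mult.commute)
  also have "\<dots> = mtrace (B * A)"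
    unfolding mtrace_def using assms by (auto simp: scalar_prod_def lessThan_atLeast0 intro!: sum.cong)
  finally show ?thesis .
qed

lemma mtrace_minus: assumes "(A::complex mat) \<in> carrier_mat n n" "B \<in> carrier_mat n n"
  shows "mtrace (A - B) = mtrace A - mtrace B"
  unfolding mtrace_def using assms by (simp add: sum_subtractf)

lemma proots_lin: "proots (\<Prod>a\<leftarrow>xs. [:- a, 1:]) = mset (xs :: complex list)"
proof (induction xs)
  case (Cons a xs)
  have nz: "(\<Prod>a\<leftarrow>xs. [:- a, 1:]) \<noteq> 0" by (auto simp: prod_list_zero_iff)
  have "proots (\<Prod>a\<leftarrow>a#xs. [:- a, 1:]) = proots ([:- a, 1:] * (\<Prod>a\<leftarrow>xs. [:- a, 1:]))" by simp
  also have "\<dots> = proots [:- a, 1:] + proots (\<Prod>a\<leftarrow>xs. [:- a, 1:])"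
    by (rule proots_mult) (use nz in auto)
  finally show ?case using Cons by (simp add: proots_linear_factor)
qed simp

lemma conj_index: assumes "(U::complex mat) \<in> carrier_mat n n" "M \<in> carrier_mat n n" "i < n"
  shows "(mat_adjoint U * M * U) $$ (i,i) = (M *\<^sub>v col U i) \<bullet>c col U i"
  using assms by (auto simp: scalar_prod_def assoc_mult_mat[of _ n n _ n _ n] sum_distrib_left
     mult.commute mult.left_commute intro!: sum.cong)




lemma mtrace_diag_mult: assumes T: "(T::complex mat) \<in> carrier_mat n n" and R: "R \<in> carrier_mat n n"
  and diag: "\<And>i j. i < n \<Longrightarrow> j < n \<Longrightarrow> i \<noteq> j \<Longrightarrow> T $$ (i,j) = 0"
  shows "mtrace (T * R) = (\<Sum>i<n. T $$ (i,i) * R $$ (i,i))"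
proof -
  have "mtrace (T * R) = (\<Sum>i<n. \<Sum>k<n. T $$ (i,k) * R $$ (k,i))"
    unfolding mtrace_def using T R by (auto simp: scalar_prod_def lessThan_atLeast0 intro!: sum.cong)
  also have "\<dots> = (\<Sum>i<n. T $$ (i,i) * R $$ (i,i))"
  proof (rule sum.cong[OF refl])
    fix i assume i: "i \<in> {..<n}"
    have "(\<Sum>k<n. T $$ (i,k) * R $$ (k,i)) = (\<Sum>k\<in>{i}. T $$ (i,k) * R $$ (k,i))"
      by (rule sum.mono_neutral_right) (use i diag in auto)
    then show "(\<Sum>k<n. T $$ (i,k) * R $$ (k,i)) = T $$ (i,i) * R $$ (i,i)" by simp
  qed
  finally show ?thesis .
qed

lemma herm_key:
  fixes H :: "complex mat"
  assumes H: "H \<in> carrier_mat n n" and herm: "hermitian_mat H"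
  obtains d :: "nat \<Rightarrow> real" where
    "trace_abs H = (\<Sum>i<n. \<bar>d i\<bar>)"
    "Re (mtrace H) = (\<Sum>i<n. d i)"
    "psd_mat H \<Longrightarrow> \<forall>i<n. 0 \<le> d i"
    "\<And>\<rho>. density_matrix n \<rho> \<Longrightarrow> \<exists>r. (\<forall>i<n. 0 \<le> r i \<and> r i \<le> 1) \<and> Re (mtrace (H * \<rho>)) = (\<Sum>i<n. d i * r i)"
proof -
  obtain U T where U: "U \<in> carrier_mat n n" and T: "T \<in> carrier_mat n n" and UU: "mat_adjoint U * U = 1\<^sub>m n"
    and ut: "upper_triangular T" and HT: "H = U * T * mat_adjoint U"
    using schur_unitary[OF H] by blast
  have aU: "mat_adjoint U \<in> carrier_mat n n" using U by auto
  have UU': "U * mat_adjoint U = 1\<^sub>m n"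
    using mat_mult_left_right_inverse[OF aU U UU] .
  have TH: "T = mat_adjoint U * H * U"
  proof -
    have "mat_adjoint U * H * U = (mat_adjoint U * U) * T * (mat_adjoint U * U)"
      unfolding HT using U T aU by (simp add: sq_mult assoc_mult_mat[of _ n n _ n _ n])
    then show ?thesis using UU T by simp
  qed
  have adjH: "mat_adjoint H = H" using herm unfolding hermitian_mat_def by auto
  have adjT: "mat_adjoint T = T"
  proof -
    have "mat_adjoint T = mat_adjoint U * mat_adjoint H * mat_adjoint (mat_adjoint U)"
      unfolding TH using U H aU
      by (simp add: adj_mult[of _ n n _ n] sq_mult assoc_mult_mat[of _ n n _ n _ n])
    then show ?thesis using adjH TH by simp
  qed
  have Tij: "T $$ (i,j) = 0" if "i < n" "j < n" "i \<noteq> j" for i j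
  proof (cases "j < i")
    case True then show ?thesis using ut T that by auto
  next
    case False
    hence "T $$ (j,i) = 0" using ut T that by auto
    moreover have "T $$ (i,j) = cnj (T $$ (j,i))"
      using arg_cong[OF adjT, of "\<lambda>M. M $$ (i,j)"] T that by auto
    ultimately show ?thesis by simp
  qed
  define d where "d i = Re (T $$ (i,i))" for i
  have Tii: "T $$ (i,i) = complex_of_real (d i)" if "i < n" for i
  proof -
    have "T $$ (i,i) = cnj (T $$ (i,i))"
      using arg_cong[OF adjT, of "\<lambda>M. M $$ (i,i)"] T that by auto
    then show ?thesis unfolding d_def by (simp add: complex_eq_iff)
  qed
  have sim: "similar_mat H T"
    by (rule similar_matI[of H T U "mat_adjoint U" n]) (use H T U aU UU UU' HT in auto)
  have cp: "char_poly H = (\<Prod>a\<leftarrow>diag_mat T. [:- a, 1:])"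
    using char_poly_similar[OF sim] char_poly_upper_triangular[OF T ut] by simp
  have dT: "diag_mat T = map (\<lambda>i. T $$ (i,i)) [0..<n]" unfolding diag_mat_def using T by simp
  have "trace_abs H = (\<Sum>i\<in>{0..<n}. cmod (T $$ (i, i)))"
    unfolding trace_abs_def cp proots_lin dT by (simp add: multiset.map_comp o_def sum_unfold_sum_mset)
  also have "\<dots> = (\<Sum>i<n. \<bar>d i\<bar>)"
    by (simp add: lessThan_atLeast0 Tii)
  finally have ta: "trace_abs H = (\<Sum>i<n. \<bar>d i\<bar>)" .
  have "mtrace H = mtrace (U * (T * mat_adjoint U))"
    unfolding HT using U T aU by (simp add: assoc_mult_mat[of _ n n _ n _ n])
  also have "\<dots> = mtrace ((T * mat_adjoint U) * U)"
    by (rule mtrace_comm[of _ n n]) (use U T aU in auto)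
  also have "\<dots> = mtrace T" using U T aU UU by (simp add: assoc_mult_mat[of _ n n _ n _ n])
  also have "\<dots> = (\<Sum>i<n. complex_of_real (d i))" unfolding mtrace_def using T Tii by simp
  finally have tr: "Re (mtrace H) = (\<Sum>i<n. d i)" by simp
  have psd: "\<forall>i<n. 0 \<le> d i" if "psd_mat H"
  proof (intro allI impI)
    fix i assume i: "i < n"
    have "d i = Re ((H *\<^sub>v col U i) \<bullet>c col U i)"
      unfolding d_def TH using conj_index[OF U H i] by simp
    also have "\<dots> \<ge> 0" using that H U i unfolding psd_mat_def by auto
    finally show "0 \<le> d i" .
  qed
  have dens: "\<exists>r. (\<forall>i<n. 0 \<le> r i \<and> r i \<le> 1) \<and> Re (mtrace (H * \<rho>)) = (\<Sum>i<n. d i * r i)"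
    if dm: "density_matrix n \<rho>" for \<rho>
  proof -
    have \<rho>: "\<rho> \<in> carrier_mat n n" and psd\<rho>: "psd_mat \<rho>" and tr\<rho>: "mtrace \<rho> = 1"
      using dm unfolding density_matrix_def by auto
    define R where "R = mat_adjoint U * \<rho> * U"
    have R: "R \<in> carrier_mat n n" unfolding R_def using U \<rho> by auto
    define r where "r i = Re (R $$ (i,i))" for i
    have r0: "0 \<le> r i" if i: "i < n" for i
    proof -
      have "r i = Re ((\<rho> *\<^sub>v col U i) \<bullet>c col U i)"
        unfolding r_def R_def using conj_index[OF U \<rho> i] by simp
      also have "\<dots> \<ge> 0" using psd\<rho> \<rho> U i unfolding psd_mat_def by auto
      finally show ?thesis .
    qed
    have "mtrace R = mtrace (mat_adjoint U * (\<rho> * U))"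
      unfolding R_def using U \<rho> aU by (simp add: assoc_mult_mat[of _ n n _ n _ n])
    also have "\<dots> = mtrace ((\<rho> * U) * mat_adjoint U)"
      by (rule mtrace_comm[of _ n n]) (use U \<rho> aU in auto)
    also have "\<dots> = mtrace \<rho>" using U \<rho> aU UU' by (simp add: assoc_mult_mat[of _ n n _ n _ n])
    finally have "mtrace R = 1" using tr\<rho> by simp
    hence rsum: "(\<Sum>i<n. r i) = 1" unfolding r_def mtrace_def using R
      by (metis Re_sum carrier_matD(1) one_complex.simps(1))
    have r1: "r i \<le> 1" if i: "i < n" for i
    proof -
      have "r i \<le> (\<Sum>i<n. r i)" by (rule member_le_sum) (use i r0 in auto)
      then show ?thesis using rsum by simp
    qed
    have "mtrace (H * \<rho>) = mtrace (U * (T * mat_adjoint U * \<rho>))"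
      unfolding HT using U T aU \<rho> by (simp add: sq_mult assoc_mult_mat[of _ n n _ n _ n])
    also have "\<dots> = mtrace ((T * mat_adjoint U * \<rho>) * U)"
      by (rule mtrace_comm[of _ n n]) (use U T aU \<rho> in auto)
    also have "\<dots> = mtrace (T * R)"
      unfolding R_def using U T aU \<rho> by (simp add: sq_mult assoc_mult_mat[of _ n n _ n _ n])
    also have "\<dots> = (\<Sum>i<n. T $$ (i,i) * R $$ (i,i))"
      by (rule mtrace_diag_mult[OF T R Tij])
    finally have "Re (mtrace (H * \<rho>)) = (\<Sum>i<n. d i * r i)"
      unfolding r_def by (simp add: Re_sum Tii)
    then show ?thesis using r0 r1 by blast
  qed
  show ?thesis using that[OF ta tr psd dens] by blast
qed




lemma real_bound: assumes "(\<Sum>i<n. d i) = (0::real)" "\<forall>i<n. 0 \<le> r i \<and> r i \<le> 1"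
  shows "(\<Sum>i<n. d i * r i) \<le> (\<Sum>i<n. \<bar>d i\<bar>) / 2" "- ((\<Sum>i<n. \<bar>d i\<bar>) / 2) \<le> (\<Sum>i<n. d i * r i)"
proof -
  have "(\<Sum>i<n. d i * r i) \<le> (\<Sum>i<n. (\<bar>d i\<bar> + d i) / 2)"
  proof (rule sum_mono)
    fix i assume "i \<in> {..<n}"
    hence "0 \<le> r i" "r i \<le> 1" using assms by auto
    then show "d i * r i \<le> (\<bar>d i\<bar> + d i) / 2"
      by (cases "d i \<ge> 0") (auto simp: mult_left_le mult_nonpos_nonneg)
  qed
  also have "\<dots> = (\<Sum>i<n. \<bar>d i\<bar>) / 2" using assms(1) by (simp add: sum.distrib sum_divide_distrib[symmetric])
  finally show "(\<Sum>i<n. d i * r i) \<le> (\<Sum>i<n. \<bar>d i\<bar>) / 2" .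
  have "(\<Sum>i<n. (d i - \<bar>d i\<bar>) / 2) \<le> (\<Sum>i<n. d i * r i)"
  proof (rule sum_mono)
    fix i assume "i \<in> {..<n}"
    hence "0 \<le> r i" "r i \<le> 1" using assms by auto
    then show "(d i - \<bar>d i\<bar>) / 2 \<le> d i * r i"
      by (cases "d i \<ge> 0") (auto simp: mult_nonneg_nonneg mult_left_le_one_le)
  qed
  moreover have "(\<Sum>i<n. (d i - \<bar>d i\<bar>) / 2) = - ((\<Sum>i<n. \<bar>d i\<bar>) / 2)"
    using assms(1) by (simp add: sum_subtractf sum_divide_distrib[symmetric])
  ultimately show "- ((\<Sum>i<n. \<bar>d i\<bar>) / 2) \<le> (\<Sum>i<n. d i * r i)" by simp
qed

lemma purity_le1: assumes "density_matrix n \<rho>" shows "Re (mtrace (\<rho> * \<rho>)) \<le> 1"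
proof -
  have \<rho>: "\<rho> \<in> carrier_mat n n" "psd_mat \<rho>" "mtrace \<rho> = 1" using assms unfolding density_matrix_def by auto
  hence h: "hermitian_mat \<rho>" unfolding psd_mat_def by auto
  obtain d where "trace_abs \<rho> = (\<Sum>i<n. \<bar>d i\<bar>)" "Re (mtrace \<rho>) = (\<Sum>i<n. d i)" "psd_mat \<rho> \<Longrightarrow> \<forall>i<n. 0 \<le> d i"
    "\<And>\<sigma>. density_matrix n \<sigma> \<Longrightarrow> \<exists>r. (\<forall>i<n. 0 \<le> r i \<and> r i \<le> 1) \<and> Re (mtrace (\<rho> * \<sigma>)) = (\<Sum>i<n. d i * r i)"
    by (rule herm_key[OF \<rho>(1) h]) blast
  note dd = this(2-4)
  obtain r where r: "\<forall>i<n. 0 \<le> r i \<and> r i \<le> 1" "Re (mtrace (\<rho> * \<rho>)) = (\<Sum>i<n. d i * r i)"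
    using dd(3)[OF assms] by blast
  have "(\<Sum>i<n. d i * r i) \<le> (\<Sum>i<n. d i)"
    by (rule sum_mono) (use r(1) dd(2)[OF \<rho>(2)] in \<open>auto simp: mult_left_le\<close>)
  then show ?thesis using r(2) dd(1) \<rho>(3) by simp
qed




theorem theorem1:
  fixes N :: nat and \<rho>1 \<rho>2 :: "complex mat"
  assumes "N \<ge> 1"
    and "density_matrix N \<rho>1"
    and "density_matrix N \<rho>2"
  shows "1 - superfidelity \<rho>1 \<rho>2 \<le> trace_dist \<rho>1 \<rho>2"
proof -
  note d1 = assms(2) and d2 = assms(3)
  have c1: "\<rho>1 \<in> carrier_mat N N" and h1: "hermitian_mat \<rho>1" and t1: "mtrace \<rho>1 = 1"
    using d1 unfolding density_matrix_def psd_mat_def by auto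
  have c2: "\<rho>2 \<in> carrier_mat N N" and h2: "hermitian_mat \<rho>2" and t2: "mtrace \<rho>2 = 1"
    using d2 unfolding density_matrix_def psd_mat_def by auto
  define \<Delta> where "\<Delta> = \<rho>1 - \<rho>2"
  have c: "\<Delta> \<in> carrier_mat N N" unfolding \<Delta>_def using c1 c2 by auto
  have a1: "mat_adjoint \<rho>1 = \<rho>1" and a2: "mat_adjoint \<rho>2 = \<rho>2"
    using h1 h2 unfolding hermitian_mat_def by auto
  have "mat_adjoint \<Delta> = \<Delta>"
  proof (rule eq_matI)
    fix i j assume ij: "i < dim_row \<Delta>" "j < dim_col \<Delta>"
    have "\<rho>1 $$ (i,j) = cnj (\<rho>1 $$ (j,i))" using arg_cong[OF a1, of "\<lambda>M. M $$ (i,j)"] c1 c ij by auto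
    moreover have "\<rho>2 $$ (i,j) = cnj (\<rho>2 $$ (j,i))" using arg_cong[OF a2, of "\<lambda>M. M $$ (i,j)"] c2 c ij by auto
    ultimately show "mat_adjoint \<Delta> $$ (i,j) = \<Delta> $$ (i,j)" using ij c c1 c2 unfolding \<Delta>_def by auto
  qed (use c in auto)
  hence h: "hermitian_mat \<Delta>" using c unfolding hermitian_mat_def by auto
  obtain d where ta: "trace_abs \<Delta> = (\<Sum>i<N. \<bar>d i\<bar>)" and tr: "Re (mtrace \<Delta>) = (\<Sum>i<N. d i)"
    and "psd_mat \<Delta> \<Longrightarrow> \<forall>i<N. 0 \<le> d i" and dens: "\<And>\<sigma>. density_matrix N \<sigma> \<Longrightarrow> \<exists>r. (\<forall>i<N. 0 \<le> r i \<and> r i \<le> 1) \<and> Re (mtrace (\<Delta> * \<sigma>)) = (\<Sum>i<N. d i * r i)"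
    by (rule herm_key[OF c h]) blast
  have s0: "(\<Sum>i<N. d i) = 0" using tr unfolding \<Delta>_def using mtrace_minus[OF c1 c2] t1 t2 by simp
  define D where "D = trace_dist \<rho>1 \<rho>2"
  have D: "D = (\<Sum>i<N. \<bar>d i\<bar>) / 2" unfolding D_def trace_dist_def \<Delta>_def[symmetric] ta ..
  obtain r where r: "\<forall>i<N. 0 \<le> r i \<and> r i \<le> 1" "Re (mtrace (\<Delta> * \<rho>1)) = (\<Sum>i<N. d i * r i)"
    using dens[OF d1] by blast
  obtain s where s: "\<forall>i<N. 0 \<le> s i \<and> s i \<le> 1" "Re (mtrace (\<Delta> * \<rho>2)) = (\<Sum>i<N. d i * s i)"
    using dens[OF d2] by blast
  define a where "a = Re (mtrace (\<rho>1 * \<rho>1))"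
  define b where "b = Re (mtrace (\<rho>2 * \<rho>2))"
  define t where "t = Re (mtrace (\<rho>1 * \<rho>2))"
  have comm: "mtrace (\<rho>2 * \<rho>1) = mtrace (\<rho>1 * \<rho>2)" using mtrace_comm[OF c2 c1] .
  have e1: "Re (mtrace (\<Delta> * \<rho>1)) = a - t" unfolding \<Delta>_def a_def t_def
    using minus_mult_distrib_mat[OF c1 c2 c1] mtrace_minus[of "\<rho>1 * \<rho>1" N "\<rho>2 * \<rho>1"] c1 c2 comm by simp
  have e2: "Re (mtrace (\<Delta> * \<rho>2)) = t - b" unfolding \<Delta>_def b_def t_def
    using minus_mult_distrib_mat[OF c1 c2 c2] mtrace_minus[of "\<rho>1 * \<rho>2" N "\<rho>2 * \<rho>2"] c1 c2 by simp
  have "a - t \<le> D" using real_bound(1)[OF s0 r(1)] r(2) e1 D by simp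
  moreover have "b - t \<le> D" using real_bound(2)[OF s0 s(1)] s(2) e2 D by simp
  moreover have "a \<le> 1" unfolding a_def by (rule purity_le1[OF d1])
  moreover have "b \<le> 1" unfolding b_def by (rule purity_le1[OF d2])
  ultimately have "1 - (t + sqrt (1 - a) * sqrt (1 - b)) \<le> D"
  proof -
    assume A: "a - t \<le> D" "b - t \<le> D" "a \<le> 1" "b \<le> 1"
    show ?thesis
    proof (cases "1 - a \<le> 1 - b")
      case True
      have "sqrt (1 - a) * sqrt (1 - a) \<le> sqrt (1 - a) * sqrt (1 - b)"
        by (rule mult_left_mono) (use True A in auto)
      then show ?thesis using A by simp
    next
      case False
      have "sqrt (1 - b) * sqrt (1 - b) \<le> sqrt (1 - a) * sqrt (1 - b)"
        by (rule mult_right_mono) (use False A in auto)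
      then show ?thesis using A by simp
    qed
  qed
  then show ?thesis unfolding D_def superfidelity_def a_def b_def t_def .
qed



end
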